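(* Let $X$ be a continuum, let $n\geq 2$ be an integer, and let $f:X\to X$ be a map. Consider the statements: (1) $f$ is multi-sensitive; (2) $F_n(f)$ is multi-sensitive; (3) $SF_n(f)$ is multi-sensitive. Then (1) and (2) are equivalent, and (3) implies (2).
   Context: A continuum is a nonempty compact connected metric space $(X,d)$. For $n\in\mathbb{N}$, $F_n(X)$ is the set of nonempty subsets of $X$ with at most $n$ points, with the Hausdorff metric $d_H$; $F_1(X)=\{\{x\}:x\in X\}$. For $f:X\to X$, $F_n(f)(A)=f(A)$. For $n\geq 2$, $SF_n(X)=F_n(X)/F_1(X)$ (collapsing $F_1(X)$ to a point), $q$ the quotient map, $F_X=q(F_1(X))$, and $SF_n(f)(\chi)=q(F_n(f)(q^{-1}(\chi)))$ if $\chi\neq F_X$, $SF_n(f)(F_X)=F_X$. $SF_n(X)$ carries the metric $\rho(\chi_1,\chi_2)=\mathcal{H}^2(F_1(X)\cup q^{-1}(\chi_1),F_1(X)\cup q^{-1}(\chi_2))$, with $\mathcal{H}^2$ the Hausdorff metric on closed subsets of $F_n(X)$ induced by $d_H$. A map $g$ on a metric space $(Z,D)$ is multi-sensitive if there is $\delta>0$ such that for every $m\in\mathbb{N}$ and all nonempty open $U_1,\dots,U_m\subseteq Z$ there is $k\in\mathbb{N}$ such that for every $i$ there exist $x_i,y_i\in U_i$ with $D(g^k(x_i),g^k(y_i))>\delta$ (with $D=d,d_H,\rho$ for $f,F_n(f),SF_n(f)$). *)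

theory Defs
  imports "HOL-Analysis.Analysis"
begin

definition continuum :: "'a::metric_space set \<Rightarrow> bool" where
  "continuum X \<longleftrightarrow> X \<noteq> {} \<and> compact X \<and> connected X"

definition hdist :: "('b \<Rightarrow> 'b \<Rightarrow> real) \<Rightarrow> 'b set \<Rightarrow> 'b set \<Rightarrow> real" where
  "hdist D A B = max (SUP a\<in>A. INF b\<in>B. D a b) (SUP b\<in>B. INF a\<in>A. D a b)"

definition Fn :: "nat \<Rightarrow> 'a set \<Rightarrow> 'a set set" where
  "Fn n X = {A. A \<subseteq> X \<and> A \<noteq> {} \<and> finite A \<and> card A \<le> n}"

definition dH :: "'a::metric_space set \<Rightarrow> 'a set \<Rightarrow> real" where
  "dH A B = hdist dist A B"

definition Fn_map :: "('a \<Rightarrow> 'a) \<Rightarrow> 'a set \<Rightarrow> 'a set" where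
  "Fn_map f A = f ` A"

text \<open>The quotient SF_n(X) = F_n(X)/F_1(X): the point F_X is represented by None,
  and every other point by Some A with A \<in> F_n(X) - F_1(X) (q^-1 of it is {A}).\<close>
definition SFn :: "nat \<Rightarrow> 'a set \<Rightarrow> 'a set option set" where
  "SFn n X = insert None (Some ` (Fn n X - Fn 1 X))"

definition qmap :: "'a set \<Rightarrow> 'a set option" where
  "qmap A = (if card A = 1 then None else Some A)"

definition qinv :: "'a set \<Rightarrow> 'a set option \<Rightarrow> 'a set set" where
  "qinv X c = (case c of None \<Rightarrow> Fn 1 X | Some A \<Rightarrow> {A})"

definition rho :: "'a::metric_space set \<Rightarrow> 'a set option \<Rightarrow> 'a set option \<Rightarrow> real" where
  "rho X c1 c2 = hdist dH (Fn 1 X \<union> qinv X c1) (Fn 1 X \<union> qinv X c2)"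

definition SFn_map :: "('a \<Rightarrow> 'a) \<Rightarrow> 'a set option \<Rightarrow> 'a set option" where
  "SFn_map f c = (case c of None \<Rightarrow> None | Some A \<Rightarrow> qmap (Fn_map f A))"

definition D_open :: "'b set \<Rightarrow> ('b \<Rightarrow> 'b \<Rightarrow> real) \<Rightarrow> 'b set \<Rightarrow> bool" where
  "D_open Z D U \<longleftrightarrow> U \<subseteq> Z \<and> (\<forall>x\<in>U. \<exists>e>0. {y\<in>Z. D x y < e} \<subseteq> U)"

definition multi_sensitive :: "'b set \<Rightarrow> ('b \<Rightarrow> 'b \<Rightarrow> real) \<Rightarrow> ('b \<Rightarrow> 'b) \<Rightarrow> bool" where
  "multi_sensitive Z D g \<longleftrightarrow>
     (\<exists>\<delta>>0. \<forall>m\<ge>1. \<forall>U::nat \<Rightarrow> 'b set.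
        (\<forall>i\<in>{1..m}. D_open Z D (U i) \<and> U i \<noteq> {}) \<longrightarrow>
        (\<exists>k\<ge>1. \<forall>i\<in>{1..m}. \<exists>x\<in>U i. \<exists>y\<in>U i. D ((g ^^ k) x) ((g ^^ k) y) > \<delta>))"

end

theory Submission
  imports Defs
begin

lemma Fn_iter: "(Fn_map f ^^ k) A = (f ^^ k) ` A"
  by (induction k) (auto simp: Fn_map_def image_comp)

lemma hdist_le:
  assumes "S \<noteq> {}" "T \<noteq> {}" "\<forall>s\<in>S. \<exists>t\<in>T. D s t \<le> c" "\<forall>t\<in>T. \<exists>s\<in>S. D s t \<le> c"
    "\<forall>s\<in>S. \<forall>t\<in>T. D s t \<ge> 0"
  shows "hdist D S T \<le> c"
  unfolding hdist_def
proof (rule max.boundedI)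
  show "(SUP a\<in>S. INF b\<in>T. D a b) \<le> c"
  proof (rule cSUP_least[OF assms(1)])
    fix s assume s: "s \<in> S"
    then obtain t where t: "t \<in> T" "D s t \<le> c" using assms(3) by blast
    have "bdd_below ((\<lambda>b. D s b) ` T)" using assms(5) s by (auto intro!: bdd_belowI2)
    then have "(INF b\<in>T. D s b) \<le> D s t" using t(1) by (rule cINF_lower)
    then show "(INF b\<in>T. D s b) \<le> c" using t by linarith
  qed
  show "(SUP b\<in>T. INF a\<in>S. D a b) \<le> c"
  proof (rule cSUP_least[OF assms(2)])
    fix t assume t: "t \<in> T"
    then obtain s where s: "s \<in> S" "D s t \<le> c" using assms(4) by blast
    have "bdd_below ((\<lambda>a. D a t) ` S)" using assms(5) t by (auto intro!: bdd_belowI2)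
    then have "(INF a\<in>S. D a t) \<le> D s t" using s(1) by (rule cINF_lower)
    then show "(INF a\<in>S. D a t) \<le> c" using s by linarith
  qed
qed

lemma hdist_ge1:
  assumes "s \<in> S" "bdd_above ((\<lambda>s. INF t\<in>T. D s t) ` S)"
  shows "(INF t\<in>T. D s t) \<le> hdist D S T"
  unfolding hdist_def using cSUP_upper[OF assms] by linarith

lemma hdist_ge2:
  assumes "t \<in> T" "bdd_above ((\<lambda>t. INF s\<in>S. D s t) ` T)"
  shows "(INF s\<in>S. D s t) \<le> hdist D S T"
  unfolding hdist_def using cSUP_upper[OF assms] by linarith

lemma dH_nonneg:
  assumes "finite A" "A \<noteq> {}" "B \<noteq> {}"
  shows "dH A B \<ge> 0"
proof -
  obtain a where a: "a \<in> A" using assms by blast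
  have "0 \<le> (INF b\<in>B. dist a b)" using assms by (intro cINF_greatest) auto
  also have "\<dots> \<le> hdist dist A B" using a assms by (intro hdist_ge1) auto
  finally show ?thesis by (simp add: dH_def)
qed

lemma dH_self:
  assumes "finite A" "A \<noteq> {}"
  shows "dH A A = 0"
proof -
  have "dH A A \<le> 0" unfolding dH_def using assms by (intro hdist_le) auto
  with dH_nonneg[OF assms assms(2)] show ?thesis by linarith
qed

lemma dH_image_lt:
  assumes "finite J" "J \<noteq> {}" "\<forall>j\<in>J. dist (a j) (b j) < e"
  shows "dH (a ` J) (b ` J) < e"
proof -
  define c where "c = Max ((\<lambda>j. dist (a j) (b j)) ` J)"
  have c: "c < e" unfolding c_def using assms by (subst Max_less_iff) auto
  have cj: "dist (a j) (b j) \<le> c" if "j \<in> J" for j unfolding c_def using assms that by (intro Max_ge) auto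
  have "dH (a ` J) (b ` J) \<le> c" unfolding dH_def using assms cj
    by (intro hdist_le) auto
  with c show ?thesis by linarith
qed

lemma dH_lower1:
  assumes "finite A" "finite B" "s \<in> A"
  shows "(INF t\<in>B. dist s t) \<le> dH A B"
  unfolding dH_def using assms by (intro hdist_ge1) auto

lemma dH_lower2:
  assumes "finite A" "finite B" "t \<in> B"
  shows "(INF s\<in>A. dist s t) \<le> dH A B"
  unfolding dH_def using assms by (intro hdist_ge2) auto

lemma dH_gt_points:
  assumes "finite A" "finite B" "A \<noteq> {}" "B \<noteq> {}" "dH A B > d"
  shows "\<exists>a\<in>A. \<exists>b\<in>B. dist a b > d"
proof -
  have "(SUP a\<in>A. INF b\<in>B. dist a b) > d \<or> (SUP b\<in>B. INF a\<in>A. dist a b) > d"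
    using assms(5) unfolding dH_def hdist_def by linarith
  then show ?thesis
  proof
    assume "(SUP a\<in>A. INF b\<in>B. dist a b) > d"
    then obtain a where a: "a \<in> A" "(INF b\<in>B. dist a b) > d"
      using assms by (subst (asm) less_cSUP_iff) auto
    obtain b where b: "b \<in> B" using assms by blast
    have "(INF b\<in>B. dist a b) \<le> dist a b" using b by (intro cINF_lower) auto
    then show ?thesis using a b by force
  next
    assume "(SUP b\<in>B. INF a\<in>A. dist a b) > d"
    then obtain b where b: "b \<in> B" "(INF a\<in>A. dist a b) > d"
      using assms by (subst (asm) less_cSUP_iff) auto
    obtain a where a: "a \<in> A" using assms by blast
    have "(INF a\<in>A. dist a b) \<le> dist a b" using a by (intro cINF_lower) (auto intro!: bdd_belowI2[where m=0])
    then show ?thesis using a b by force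
  qed
qed

lemma dH_lt_near:
  assumes "finite A" "finite B" "A \<noteq> {}" "B \<noteq> {}" "dH A B < e" "b \<in> B"
  shows "\<exists>a\<in>A. dist a b < e"
proof -
  have "(INF s\<in>A. dist s b) < e" using dH_lower2[OF assms(1,2,6)] assms(5) by linarith
  then show ?thesis using assms by (subst (asm) cINF_less_iff) auto
qed

lemma surj_enum:
  assumes "finite A" "A \<noteq> {}" "card A \<le> n"
  shows "\<exists>g. g ` {..<n} = A"
proof -
  obtain h where h: "bij_betw h {0..<card A} A" using ex_bij_betw_nat_finite[OF assms(1)] by blast
  have c: "card A > 0" using assms by auto
  define g where "g j = (if j < card A then h j else h 0)" for j
  have "g ` {..<n} = h ` {0..<card A}"
  proof
    show "g ` {..<n} \<subseteq> h ` {0..<card A}" using c by (auto simp: g_def)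
    show "h ` {0..<card A} \<subseteq> g ` {..<n}"
    proof
      fix y assume "y \<in> h ` {0..<card A}"
      then obtain j where "j < card A" "y = h j" by auto
      then show "y \<in> g ` {..<n}" using assms(3) by (auto simp: g_def intro!: image_eqI[of _ _ j])
    qed
  qed
  then show ?thesis using h by (auto simp: bij_betw_def)
qed


lemma Fn_mem: "A \<in> Fn n X \<longleftrightarrow> A \<subseteq> X \<and> A \<noteq> {} \<and> finite A \<and> card A \<le> n"
  by (simp add: Fn_def)

lemma ms_Fn_imp_X:
  assumes ms: "multi_sensitive (Fn n X) dH (Fn_map f)" and n: "n \<ge> 1"
  shows "multi_sensitive X dist f"
proof -
  obtain \<delta> where d: "\<delta> > 0" and H: "\<forall>m\<ge>1. \<forall>U::nat \<Rightarrow> 'a set set.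
        (\<forall>i\<in>{1..m}. D_open (Fn n X) dH (U i) \<and> U i \<noteq> {}) \<longrightarrow>
        (\<exists>k\<ge>1. \<forall>i\<in>{1..m}. \<exists>x\<in>U i. \<exists>y\<in>U i. dH ((Fn_map f ^^ k) x) ((Fn_map f ^^ k) y) > \<delta>)"
    using ms unfolding multi_sensitive_def by blast
  show ?thesis unfolding multi_sensitive_def
  proof (intro exI[of _ \<delta>] conjI allI impI d)
    fix m :: nat and V :: "nat \<Rightarrow> 'a set"
    assume m: "1 \<le> m" and V: "\<forall>i\<in>{1..m}. D_open X dist (V i) \<and> V i \<noteq> {}"
    define U where "U i = {A \<in> Fn n X. A \<subseteq> V i}" for i
    have Uo: "D_open (Fn n X) dH (U i) \<and> U i \<noteq> {}" if i: "i \<in> {1..m}" for i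
    proof
      have Vo: "V i \<subseteq> X" "\<forall>x\<in>V i. \<exists>e>0. {y\<in>X. dist x y < e} \<subseteq> V i" "V i \<noteq> {}"
        using V i unfolding D_open_def by auto
      then obtain v where v: "v \<in> V i" by blast
      then have "{v} \<in> U i" using Vo n by (auto simp: U_def Fn_def)
      then show "U i \<noteq> {}" by blast
      show "D_open (Fn n X) dH (U i)" unfolding D_open_def
      proof (intro conjI ballI)
        show "U i \<subseteq> Fn n X" by (auto simp: U_def)
        fix A assume A: "A \<in> U i"
        then have A': "finite A" "A \<noteq> {}" "A \<subseteq> V i" by (auto simp: U_def Fn_def)
        obtain \<epsilon> where \<epsilon>: "\<forall>a\<in>A. \<epsilon> a > 0 \<and> {y\<in>X. dist a y < \<epsilon> a} \<subseteq> V i"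
        proof -
          have "\<forall>a\<in>A. \<exists>e. e > 0 \<and> {y\<in>X. dist a y < e} \<subseteq> V i" using Vo(2) A'(3) by blast
          then obtain \<epsilon> where "\<forall>a\<in>A. \<epsilon> a > 0 \<and> {y\<in>X. dist a y < \<epsilon> a} \<subseteq> V i" by (rule bchoice[THEN exE])
          then show ?thesis using that by blast
        qed
        define e where "e = Min (\<epsilon> ` A)"
        have e: "e > 0" unfolding e_def using A' \<epsilon> by (subst Min_gr_iff) auto
        have "{B \<in> Fn n X. dH A B < e} \<subseteq> U i"
        proof
          fix B assume B: "B \<in> {B \<in> Fn n X. dH A B < e}"
          then have B': "finite B" "B \<noteq> {}" "B \<subseteq> X" "dH A B < e" by (auto simp: Fn_def)
          have "b \<in> V i" if b: "b \<in> B" for b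
          proof -
            obtain a where a: "a \<in> A" "dist a b < e" using dH_lt_near[OF A'(1) B'(1) A'(2) B'(2) B'(4) b] by blast
            have "e \<le> \<epsilon> a" unfolding e_def using A' a by auto
            then have "b \<in> {y\<in>X. dist a y < \<epsilon> a}" using a b B'(3) by auto
            then show ?thesis using \<epsilon> a(1) by blast
          qed
          then show "B \<in> U i" using B by (auto simp: U_def)
        qed
        then show "\<exists>e>0. {y \<in> Fn n X. dH A y < e} \<subseteq> U i" using e by blast
      qed
    qed
    have "\<exists>k\<ge>1. \<forall>i\<in>{1..m}. \<exists>x\<in>U i. \<exists>y\<in>U i. dH ((Fn_map f ^^ k) x) ((Fn_map f ^^ k) y) > \<delta>"
      using H[rule_format, of m U] m Uo by blast
    then obtain k where k: "k \<ge> 1" and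
      kk: "\<forall>i\<in>{1..m}. \<exists>x\<in>U i. \<exists>y\<in>U i. dH ((Fn_map f ^^ k) x) ((Fn_map f ^^ k) y) > \<delta>"
      by blast
    show "\<exists>k\<ge>1. \<forall>i\<in>{1..m}. \<exists>x\<in>V i. \<exists>y\<in>V i. dist ((f ^^ k) x) ((f ^^ k) y) > \<delta>"
    proof (intro exI[of _ k] conjI k ballI)
      fix i assume i: "i \<in> {1..m}"
      then obtain A B where AB: "A \<in> U i" "B \<in> U i" "dH ((f ^^ k) ` A) ((f ^^ k) ` B) > \<delta>"
        using kk[unfolded Fn_iter] i by blast
      then have "finite A" "finite B" "A \<noteq> {}" "B \<noteq> {}" by (auto simp: U_def Fn_def)
      then obtain p q where "p \<in> (f ^^ k) ` A" "q \<in> (f ^^ k) ` B" "dist p q > \<delta>"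
        using dH_gt_points[OF _ _ _ _ AB(3)] by blast
      then show "\<exists>x\<in>V i. \<exists>y\<in>V i. dist ((f ^^ k) x) ((f ^^ k) y) > \<delta>"
        using AB by (auto simp: U_def)
    qed
  qed
qed


lemma ms_X_imp_Fn:
  assumes ms: "multi_sensitive X dist f" and n: "n \<ge> 1"
  shows "multi_sensitive (Fn n X) dH (Fn_map f)"
proof -
  obtain \<delta> where d: "\<delta> > 0" and H: "\<forall>m\<ge>1. \<forall>U::nat \<Rightarrow> 'a set.
        (\<forall>i\<in>{1..m}. D_open X dist (U i) \<and> U i \<noteq> {}) \<longrightarrow>
        (\<exists>k\<ge>1. \<forall>i\<in>{1..m}. \<exists>x\<in>U i. \<exists>y\<in>U i. dist ((f ^^ k) x) ((f ^^ k) y) > \<delta>)"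
    using ms unfolding multi_sensitive_def by blast
  show ?thesis unfolding multi_sensitive_def
  proof (intro exI[of _ "\<delta>/2"] conjI allI impI)
    show "\<delta>/2 > 0" using d by simp
    fix m :: nat and U :: "nat \<Rightarrow> 'a set set"
    assume m: "1 \<le> m" and U: "\<forall>i\<in>{1..m}. D_open (Fn n X) dH (U i) \<and> U i \<noteq> {}"
    have "\<forall>i\<in>{1..m}. \<exists>p. fst p \<in> U i \<and> snd p > 0 \<and> {B\<in>Fn n X. dH (fst p) B < snd p} \<subseteq> U i"
      using U unfolding D_open_def by fastforce
    then obtain P0 where P0: "\<forall>i\<in>{1..m}. fst (P0 i) \<in> U i \<and> snd (P0 i) > 0 \<and> {B\<in>Fn n X. dH (fst (P0 i)) B < snd (P0 i)} \<subseteq> U i"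
      by (rule bchoice[THEN exE]) blast
    define A where "A i = fst (P0 i)" for i
    define \<epsilon> where "\<epsilon> i = snd (P0 i)" for i
    have A: "\<forall>i\<in>{1..m}. A i \<in> U i" and \<epsilon>: "\<forall>i\<in>{1..m}. \<epsilon> i > 0 \<and> {B\<in>Fn n X. dH (A i) B < \<epsilon> i} \<subseteq> U i"
      using P0 by (auto simp: A_def \<epsilon>_def)
    have AF: "A i \<in> Fn n X" if "i \<in> {1..m}" for i using A U that unfolding D_open_def by blast
    have "\<forall>i\<in>{1..m}. \<exists>g. g ` {..<n} = A i"
      by (intro ballI surj_enum) (use AF in \<open>auto simp: Fn_def\<close>)
    then obtain e where e: "\<forall>i\<in>{1..m}. e i ` {..<n} = A i"
      by (rule bchoice[THEN exE]) blast
    define I where "I l = (l - 1) div n + 1" for l :: nat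
    define J where "J l = (l - 1) mod n" for l :: nat
    define idx where "idx i j = (i - 1) * n + j + 1" for i j :: nat
    define V where "V l = {y\<in>X. dist (e (I l) (J l)) y < \<epsilon> (I l)}" for l
    have idx: "idx i j \<in> {1..m*n}" "I (idx i j) = i" "J (idx i j) = j"
      if ij: "i \<in> {1..m}" "j < n" for i j
    proof -
      obtain i' where i': "i = Suc i'" "i' < m"
      proof (cases i)
        case 0 then show ?thesis using ij by auto
      next
        case (Suc i'') then show ?thesis using that ij by auto
      qed
      have "i' * n + j < m * n"
      proof -
        have "i' * n + j < i' * n + n" using that by simp
        also have "\<dots> = Suc i' * n" by simp
        also have "\<dots> \<le> m * n" using i' by (intro mult_right_mono) auto
        finally show ?thesis .
      qed
      then show "idx i j \<in> {1..m*n}" by (simp add: idx_def i')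
      show "I (idx i j) = i" using that by (simp add: idx_def I_def i')
      show "J (idx i j) = j" using that by (simp add: idx_def J_def i')
    qed
    have IJ: "I l \<in> {1..m}" "J l < n" if "l \<in> {1..m*n}" for l
    proof -
      have "l - 1 < m * n" using that by auto
      then have "(l - 1) div n < m" by (simp add: less_mult_imp_div_less)
      then show "I l \<in> {1..m}" by (simp add: I_def)
      show "J l < n" using n by (simp add: J_def)
    qed
    have eX: "e i j \<in> A i" "A i \<subseteq> X" if "i \<in> {1..m}" "j < n" for i j
    proof -
      have "e i j \<in> e i ` {..<n}" using that by blast
      then show "e i j \<in> A i" using e that by blast
      show "A i \<subseteq> X" using AF[OF that(1)] by (simp add: Fn_def)
    qed
    have Vo: "D_open X dist (V l) \<and> V l \<noteq> {}" if l: "l \<in> {1..m*n}" for l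
    proof
      have el: "e (I l) (J l) \<in> X" "\<epsilon> (I l) > 0" using eX[OF IJ[OF l]] IJ[OF l] \<epsilon> by auto
      then show "V l \<noteq> {}" unfolding V_def by force
      show "D_open X dist (V l)" unfolding D_open_def
      proof (intro conjI ballI)
        show "V l \<subseteq> X" by (auto simp: V_def)
        fix x assume x: "x \<in> V l"
        show "\<exists>r>0. {y\<in>X. dist x y < r} \<subseteq> V l"
        proof (intro exI[of _ "\<epsilon> (I l) - dist (e (I l) (J l)) x"] conjI)
          show "\<epsilon> (I l) - dist (e (I l) (J l)) x > 0" using x by (auto simp: V_def)
          show "{y\<in>X. dist x y < \<epsilon> (I l) - dist (e (I l) (J l)) x} \<subseteq> V l"
          proof
            fix y assume y: "y \<in> {y\<in>X. dist x y < \<epsilon> (I l) - dist (e (I l) (J l)) x}"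
            have "dist (e (I l) (J l)) y \<le> dist (e (I l) (J l)) x + dist x y" by (rule dist_triangle)
            then show "y \<in> V l" using y by (auto simp: V_def)
          qed
        qed
      qed
    qed
    have "\<exists>k\<ge>1. \<forall>l\<in>{1..m*n}. \<exists>x\<in>V l. \<exists>y\<in>V l. dist ((f ^^ k) x) ((f ^^ k) y) > \<delta>"
      using H[rule_format, of "m*n" V] m n Vo by simp
    then obtain k where k: "k \<ge> 1"
      and kk: "\<forall>l\<in>{1..m*n}. \<exists>x\<in>V l. \<exists>y\<in>V l. dist ((f ^^ k) x) ((f ^^ k) y) > \<delta>" by blast
    have "\<forall>l\<in>{1..m*n}. \<exists>p. fst p \<in> V l \<and> snd p \<in> V l \<and> dist ((f ^^ k) (fst p)) ((f ^^ k) (snd p)) > \<delta>"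
      using kk by force
    then obtain P where P: "\<forall>l\<in>{1..m*n}. fst (P l) \<in> V l \<and> snd (P l) \<in> V l \<and> dist ((f ^^ k) (fst (P l))) ((f ^^ k) (snd (P l))) > \<delta>"
      by (rule bchoice[THEN exE]) blast
    define px where "px l = fst (P l)" for l
    define py where "py l = snd (P l)" for l
    have px: "\<forall>l\<in>{1..m*n}. px l \<in> V l" and py: "\<forall>l\<in>{1..m*n}. py l \<in> V l \<and> dist ((f ^^ k) (px l)) ((f ^^ k) (py l)) > \<delta>"
      using P by (auto simp: px_def py_def)
    define F where "F = f ^^ k"
    show "\<exists>k\<ge>1. \<forall>i\<in>{1..m}. \<exists>x\<in>U i. \<exists>y\<in>U i. dH ((Fn_map f ^^ k) x) ((Fn_map f ^^ k) y) > \<delta>/2"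
    proof (intro exI[of _ k] conjI k ballI)
      fix i assume i: "i \<in> {1..m}"
      define xs where "xs j = px (idx i j)" for j
      define ys where "ys j = py (idx i j)" for j
      define t where "t j = (if dist (F (xs 0)) (F (xs j)) > \<delta>/2 then xs j else ys j)" for j
      have xy: "xs j \<in> X" "ys j \<in> X" "dist (e i j) (xs j) < \<epsilon> i" "dist (e i j) (ys j) < \<epsilon> i"
        "dist (F (xs j)) (F (ys j)) > \<delta>" if "j < n" for j
        using px[rule_format, OF idx(1)[OF i that]] py[rule_format, OF idx(1)[OF i that]]
          idx(2,3)[OF i that]
        by (auto simp: V_def xs_def ys_def F_def)
      have "0 \<in> {..<n}" using n by simp
      then have fin: "finite {..<n}" "{..<n} \<noteq> {}" by auto
      have inU: "g ` {..<n} \<in> U i" if g: "\<forall>j<n. g j \<in> X \<and> dist (e i j) (g j) < \<epsilon> i" for g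
      proof -
        have "card (g ` {..<n}) \<le> n" using card_image_le[OF fin(1), of g] by simp
        then have "g ` {..<n} \<in> Fn n X" using g fin by (auto simp: Fn_def)
        moreover have "dH (A i) (g ` {..<n}) < \<epsilon> i"
        proof -
          have "dH (e i ` {..<n}) (g ` {..<n}) < \<epsilon> i" using g fin by (intro dH_image_lt) auto
          then show ?thesis using e i by simp
        qed
        ultimately show ?thesis using \<epsilon> i by blast
      qed
      have S: "xs ` {..<n} \<in> U i" by (rule inU) (use xy in auto)
      have T: "t ` {..<n} \<in> U i" by (rule inU) (use xy in \<open>auto simp: t_def\<close>)
      have far: "dist (F (xs 0)) (F (t j)) > \<delta>/2" if j: "j < n" for j
      proof (cases "dist (F (xs 0)) (F (xs j)) > \<delta>/2")
        case True then show ?thesis by (simp add: t_def)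
      next
        case False
        have "dist (F (xs j)) (F (ys j)) \<le> dist (F (xs j)) (F (xs 0)) + dist (F (xs 0)) (F (ys j))"
          by (rule dist_triangle)
        then show ?thesis using False xy(5)[OF j] by (simp add: t_def dist_commute)
      qed
      have "\<delta>/2 < (INF b\<in>F ` t ` {..<n}. dist (F (xs 0)) b)"
        using fin far by (subst finite_less_Inf_iff) auto
      also have "\<dots> \<le> dH (F ` xs ` {..<n}) (F ` t ` {..<n})"
        using fin n by (intro dH_lower1) auto
      finally show "\<exists>x\<in>U i. \<exists>y\<in>U i. dH ((Fn_map f ^^ k) x) ((Fn_map f ^^ k) y) > \<delta>/2"
        using S T by (auto simp: Fn_iter F_def)
    qed
  qed
qed


lemma F1_elem: assumes "t \<in> Fn 1 X" obtains x where "x \<in> X" "t = {x}"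
proof -
  have "finite t" "t \<noteq> {}" "card t \<le> 1" "t \<subseteq> X" using assms by (auto simp: Fn_def)
  then have "card t = 1" by (simp add: Suc_leI antisym card_gt_0_iff)
  then obtain x where "t = {x}" by (auto simp: card_Suc_eq)
  then show ?thesis using that \<open>t \<subseteq> X\<close> by auto
qed

lemma Fn_fin: "t \<in> Fn n X \<Longrightarrow> finite t \<and> t \<noteq> {}" by (simp add: Fn_def)

lemma qinv_qmap: assumes "P \<in> Fn n X" shows "Fn 1 X \<union> qinv X (qmap P) = insert P (Fn 1 X)"
proof (cases "card P = 1")
  case True
  then have "P \<in> Fn 1 X" using assms by (auto simp: Fn_def)
  then show ?thesis using True by (auto simp: qmap_def qinv_def)
qed (auto simp: qmap_def qinv_def)

lemma rho_le:
  assumes P: "P \<in> Fn n X" and Q: "Q \<in> Fn n X"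
  shows "rho X (qmap P) (qmap Q) \<le> dH P Q"
proof -
  have fin: "finite t \<and> t \<noteq> {}" if "t \<in> insert P (Fn 1 X) \<union> insert Q (Fn 1 X)" for t
    using that P Q by (auto simp: Fn_def)
  have c0: "dH P Q \<ge> 0" using fin by (intro dH_nonneg) auto
  show ?thesis unfolding rho_def qinv_qmap[OF P] qinv_qmap[OF Q]
  proof (rule hdist_le)
    show "\<forall>s\<in>insert P (Fn 1 X). \<exists>t\<in>insert Q (Fn 1 X). dH s t \<le> dH P Q"
    proof
      fix s assume s: "s \<in> insert P (Fn 1 X)"
      show "\<exists>t\<in>insert Q (Fn 1 X). dH s t \<le> dH P Q"
      proof (cases "s = P")
        case False
        then have "s \<in> Fn 1 X" using s by simp
        moreover have "dH s s = 0" using fin s by (intro dH_self) auto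
        ultimately show ?thesis using c0 by (intro bexI[of _ s]) auto
      qed auto
    qed
    show "\<forall>t\<in>insert Q (Fn 1 X). \<exists>s\<in>insert P (Fn 1 X). dH s t \<le> dH P Q"
    proof
      fix s assume s: "s \<in> insert Q (Fn 1 X)"
      show "\<exists>t\<in>insert P (Fn 1 X). dH t s \<le> dH P Q"
      proof (cases "s = Q")
        case False
        then have "s \<in> Fn 1 X" using s by simp
        moreover have "dH s s = 0" using fin s by (intro dH_self) auto
        ultimately show ?thesis using c0 by (intro bexI[of _ s]) auto
      qed auto
    qed
    show "\<forall>s\<in>insert P (Fn 1 X). \<forall>t\<in>insert Q (Fn 1 X). dH s t \<ge> 0"
      using fin by (intro ballI dH_nonneg) auto
  qed auto
qed

lemma SFn_step: assumes "finite C" "C \<noteq> {}" shows "SFn_map f (qmap C) = qmap (f ` C)"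
proof (cases "card C = 1")
  case True
  then obtain c where "C = {c}" by (auto simp: card_Suc_eq)
  then show ?thesis by (simp add: SFn_map_def qmap_def)
qed (simp add: SFn_map_def qmap_def Fn_map_def)

lemma SFn_iter: assumes "finite B" "B \<noteq> {}" shows "(SFn_map f ^^ k) (qmap B) = qmap ((f ^^ k) ` B)"
  by (induction k) (use assms in \<open>auto simp: SFn_step image_comp\<close>)

lemma iter_X: "f ` X \<subseteq> X \<Longrightarrow> (f ^^ k) ` X \<subseteq> X"
  by (induction k) auto

lemma dH_sing_lower:
  assumes "b1 \<in> B" "b2 \<in> B" "finite B"
  shows "dH B {x} \<ge> dist b1 b2 / 2"
proof -
  have "dist b1 x \<le> dH B {x}" using dH_lower1[OF assms(3) _ assms(1), of "{x}"] by simp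
  moreover have "dist b2 x \<le> dH B {x}" using dH_lower1[OF assms(3) _ assms(2), of "{x}"] by simp
  moreover have "dist b1 b2 \<le> dist b1 x + dist b2 x" by (rule dist_triangle2)
  ultimately show ?thesis by linarith
qed

lemma rho_lower:
  assumes B: "B \<in> Fn n X" and T: "\<forall>t\<in>Fn 1 X \<union> qinv X c. dH B t \<ge> r" "Fn 1 X \<noteq> {}"
    and c: "qinv X c \<subseteq> Fn n X"
  shows "rho X (Some B) c \<ge> r"
proof -
  let ?T = "Fn 1 X \<union> qinv X c"
  have fin: "finite t \<and> t \<noteq> {}" if "t \<in> ?T" for t using that c by (auto simp: Fn_def)
  have "r \<le> (INF t\<in>?T. dH B t)" using T by (intro cINF_greatest) auto
  also have "\<dots> \<le> hdist dH (Fn 1 X \<union> {B}) ?T"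
  proof (rule hdist_ge1)
    show "B \<in> Fn 1 X \<union> {B}" by simp
    have "(INF t\<in>?T. dH s t) \<le> 0" if s: "s \<in> Fn 1 X" for s
    proof -
      have "(INF t\<in>?T. dH s t) \<le> dH s s"
        using fin s by (intro cINF_lower bdd_belowI2[where m=0] dH_nonneg) (auto simp: Fn_def)
      then show ?thesis using dH_self[of s] s by (auto simp: Fn_def)
    qed
    then have "bdd_above ((\<lambda>s. INF t\<in>?T. dH s t) ` Fn 1 X)" by (intro bdd_aboveI2) auto
    then show "bdd_above ((\<lambda>s. INF t\<in>?T. dH s t) ` (Fn 1 X \<union> {B}))" by simp
  qed
  finally show ?thesis by (simp add: rho_def qinv_def)
qed


lemma Fn_mono: "m \<le> n \<Longrightarrow> Fn m X \<subseteq> Fn n X" by (auto simp: Fn_def)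

lemma ms_SFn_imp_Fn:
  assumes ms: "multi_sensitive (SFn n X) (rho X) (SFn_map f)" and n: "n \<ge> 2"
    and conn: "connected X" and fX: "f ` X \<subseteq> X"
  shows "multi_sensitive (Fn n X) dH (Fn_map f)"
proof -
  obtain \<delta> where d: "\<delta> > 0" and H: "\<forall>m\<ge>1. \<forall>U::nat \<Rightarrow> 'a set option set.
        (\<forall>i\<in>{1..m}. D_open (SFn n X) (rho X) (U i) \<and> U i \<noteq> {}) \<longrightarrow>
        (\<exists>k\<ge>1. \<forall>i\<in>{1..m}. \<exists>x\<in>U i. \<exists>y\<in>U i. rho X ((SFn_map f ^^ k) x) ((SFn_map f ^^ k) y) > \<delta>)"
    using ms unfolding multi_sensitive_def by blast
  have F1n: "Fn 1 X \<subseteq> Fn n X" using n by (intro Fn_mono) auto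
  have nosing: "X \<noteq> {p}" for p
  proof
    assume Xp: "X = {p}"
    have F1ne: "{p} \<in> Fn 1 X" using Xp by (auto simp: Fn_def)
    have "Fn n X - Fn 1 X = {}"
    proof -
      have "A \<in> Fn 1 X" if "A \<in> Fn n X" for A
      proof -
        have "A = {p}" using that Xp by (auto simp: Fn_def)
        then show ?thesis using F1ne by simp
      qed
      then show ?thesis by blast
    qed
    then have S: "SFn n X = {None}" unfolding SFn_def by (metis image_empty insert_is_Un sup_bot_right)
    have it: "(SFn_map f ^^ k) None = None" for k by (induction k) (auto simp: SFn_map_def)
    have r0: "rho X None None \<le> 0" unfolding rho_def qinv_def option.case Un_absorb
    proof (rule hdist_le)
      have fin: "finite t \<and> t \<noteq> {}" if "t \<in> Fn 1 X" for t using that by (auto simp: Fn_def)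
      show "Fn 1 X \<noteq> {}" "Fn 1 X \<noteq> {}" using F1ne by blast+
      show "\<forall>s\<in>Fn 1 X. \<exists>t\<in>Fn 1 X. dH s t \<le> 0" using fin dH_self by (metis order_refl)
      show "\<forall>t\<in>Fn 1 X. \<exists>s\<in>Fn 1 X. dH s t \<le> 0" using fin dH_self by (metis order_refl)
      show "\<forall>s\<in>Fn 1 X. \<forall>t\<in>Fn 1 X. 0 \<le> dH s t" using fin dH_nonneg by blast
    qed
    have "D_open (SFn n X) (rho X) (SFn n X)" unfolding D_open_def by (auto intro: exI[of _ 1])
    then have "\<exists>k\<ge>1. \<forall>i\<in>{1..1}. \<exists>x\<in>SFn n X. \<exists>y\<in>SFn n X. rho X ((SFn_map f ^^ k) x) ((SFn_map f ^^ k) y) > \<delta>"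
      using H[rule_format, of 1 "\<lambda>_. SFn n X"] S by auto
    then show False using S it r0 d by auto
  qed
  show ?thesis unfolding multi_sensitive_def
  proof (intro exI[of _ \<delta>] conjI allI impI d)
    fix m :: nat and U :: "nat \<Rightarrow> 'a set set"
    assume m: "1 \<le> m" and U: "\<forall>i\<in>{1..m}. D_open (Fn n X) dH (U i) \<and> U i \<noteq> {}"
    have "\<exists>B. B \<in> U i \<and> card B \<ge> 2" if i: "i \<in> {1..m}" for i
    proof -
      obtain A where A: "A \<in> U i" using U i by blast
      then obtain \<epsilon> where \<epsilon>: "\<epsilon> > 0" "{B\<in>Fn n X. dH A B < \<epsilon>} \<subseteq> U i"
        using U i unfolding D_open_def by blast
      have AF: "A \<in> Fn n X" using A U i unfolding D_open_def by blast
      show ?thesis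
      proof (cases "card A \<ge> 2")
        case True then show ?thesis using A by blast
      next
        case False
        moreover have "card A > 0" using AF by (auto simp: Fn_def card_gt_0_iff)
        ultimately have "card A = 1" by linarith
        then obtain a where a: "A = {a}" by (auto simp: card_Suc_eq)
        then have aX: "a \<in> X" using AF by (auto simp: Fn_def)
        then have "a islimpt X" using conn nosing by (intro connected_imp_perfect) auto
        then obtain b where b: "b \<in> X" "b \<noteq> a" "dist b a < \<epsilon>"
          using \<epsilon>(1) by (auto simp: islimpt_approachable)
        have "dH {a} {a, b} \<le> dist a b" unfolding dH_def
          by (rule hdist_le) simp_all
        then have "dH A {a,b} < \<epsilon>" using a b by (simp add: dist_commute)
        moreover have "{a,b} \<in> Fn n X" using aX b n by (auto simp: Fn_def)
        ultimately have "{a,b} \<in> U i" using \<epsilon> by blast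
        then show ?thesis using b by (intro exI[of _ "{a,b}"]) auto
      qed
    qed
    define W where "W i = Some ` {C \<in> U i. card C \<ge> 2}" for i
    have Wo: "D_open (SFn n X) (rho X) (W i) \<and> W i \<noteq> {}" if i: "i \<in> {1..m}" for i
    proof
      show "W i \<noteq> {}" using \<open>\<And>i. i \<in> {1..m} \<Longrightarrow> \<exists>B. B \<in> U i \<and> card B \<ge> 2\<close>[OF i]
        by (auto simp: W_def)
      have UF: "U i \<subseteq> Fn n X" using U i unfolding D_open_def by blast
      show "D_open (SFn n X) (rho X) (W i)" unfolding D_open_def
      proof (intro conjI ballI)
        show "W i \<subseteq> SFn n X"
        proof
          fix x assume "x \<in> W i"
          then obtain C where C: "x = Some C" "C \<in> U i" "card C \<ge> 2" unfolding W_def by blast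
          then have "C \<in> Fn n X" using UF by blast
          moreover have "C \<notin> Fn 1 X" using C(3) unfolding Fn_def by simp
          ultimately show "x \<in> SFn n X" using C(1) unfolding SFn_def by blast
        qed
        fix x assume x: "x \<in> W i"
        then obtain B where B: "x = Some B" "B \<in> U i" "card B \<ge> 2" by (auto simp: W_def)
        have BF: "B \<in> Fn n X" using B UF by blast
        then have Bfin: "finite B" by (simp add: Fn_def)
        obtain e' where e': "e' > 0" "{C\<in>Fn n X. dH B C < e'} \<subseteq> U i"
          using U i B(2) unfolding D_open_def by blast
        have "\<not> card B \<le> Suc 0" using B by simp
        then obtain b1 b2 where b12: "b1 \<in> B" "b2 \<in> B" "b1 \<noteq> b2"
          using Bfin by (auto simp: card_le_Suc0_iff_eq)
        define \<beta> where "\<beta> = dist b1 b2 / 2"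
        have \<beta>: "\<beta> > 0" using b12 by (simp add: \<beta>_def)
        have F1: "dH B t \<ge> \<beta>" if tF: "t \<in> Fn 1 X" for t
        proof -
          obtain y where "y \<in> X" "t = {y}" using tF by (rule F1_elem)
          then show ?thesis using dH_sing_lower[OF b12(1,2) Bfin] by (simp add: \<beta>_def)
        qed
        have F1ne: "Fn 1 X \<noteq> {}"
        proof -
          have "{b1} \<in> Fn 1 X" using b12 BF by (auto simp: Fn_def)
          then show ?thesis by blast
        qed
        show "\<exists>e>0. {y \<in> SFn n X. rho X x y < e} \<subseteq> W i"
        proof (intro exI[of _ "min e' \<beta>"] conjI subsetI)
          show "min e' \<beta> > 0" using e' \<beta> by simp
          fix y assume y: "y \<in> {y \<in> SFn n X. rho X x y < min e' \<beta>}"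
          show "y \<in> W i"
          proof (cases y)
            case None
            have "rho X (Some B) None \<ge> \<beta>"
              using F1 F1ne F1n by (intro rho_lower[OF BF]) (auto simp: qinv_def)
            then show ?thesis using y None B by auto
          next
            case (Some C)
            then have CF: "C \<in> Fn n X" "C \<notin> Fn 1 X" using y by (auto simp: SFn_def)
            have T: "\<forall>t\<in>Fn 1 X \<union> qinv X (Some C). min \<beta> (dH B C) \<le> dH B t"
            proof
              fix t assume "t \<in> Fn 1 X \<union> qinv X (Some C)"
              then have "t \<in> Fn 1 X \<or> t = C" by (auto simp: qinv_def)
              then show "min \<beta> (dH B C) \<le> dH B t" using F1[of t] by (metis min.cobounded1 min.cobounded2 order_trans)
            qed
            have "qinv X (Some C) \<subseteq> Fn n X" using CF by (simp add: qinv_def)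
            then have "rho X (Some B) (Some C) \<ge> min \<beta> (dH B C)"
              using rho_lower[OF BF T F1ne] by blast
            then have "dH B C < e'" using y Some B by auto
            then have "C \<in> U i" using e' CF by blast
            moreover have "\<not> card C \<le> 1" using CF unfolding Fn_def by simp
            then have "card C \<ge> 2" by simp
            ultimately show ?thesis using Some by (auto simp: W_def)
          qed
        qed
      qed
    qed
    have "\<exists>k\<ge>1. \<forall>i\<in>{1..m}. \<exists>x\<in>W i. \<exists>y\<in>W i. rho X ((SFn_map f ^^ k) x) ((SFn_map f ^^ k) y) > \<delta>"
      using H[rule_format, of m W] m Wo by blast
    then obtain k where k: "k \<ge> 1" and
      kk: "\<forall>i\<in>{1..m}. \<exists>x\<in>W i. \<exists>y\<in>W i. rho X ((SFn_map f ^^ k) x) ((SFn_map f ^^ k) y) > \<delta>"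
      by blast
    show "\<exists>k\<ge>1. \<forall>i\<in>{1..m}. \<exists>x\<in>U i. \<exists>y\<in>U i. dH ((Fn_map f ^^ k) x) ((Fn_map f ^^ k) y) > \<delta>"
    proof (intro exI[of _ k] conjI k ballI)
      fix i assume i: "i \<in> {1..m}"
      have UF: "U i \<subseteq> Fn n X" using U i unfolding D_open_def by blast
      obtain B C where BC: "B \<in> U i" "card B \<ge> 2" "C \<in> U i" "card C \<ge> 2"
        "rho X ((SFn_map f ^^ k) (Some B)) ((SFn_map f ^^ k) (Some C)) > \<delta>"
      proof -
        obtain x y where "x \<in> W i" "y \<in> W i" "rho X ((SFn_map f ^^ k) x) ((SFn_map f ^^ k) y) > \<delta>"
          using kk i by blast
        then show ?thesis using that unfolding W_def by blast
      qed
      have BF: "B \<in> Fn n X" "C \<in> Fn n X" using BC UF by auto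
      have q: "Some B = qmap B" "Some C = qmap C" using BC by (auto simp: qmap_def)
      have img: "(f ^^ k) ` D \<in> Fn n X" if "D \<in> Fn n X" for D
      proof -
        have "(f ^^ k) ` D \<subseteq> X" using that iter_X[OF fX, of k] by (auto simp: Fn_def)
        moreover have "card ((f ^^ k) ` D) \<le> n" using that card_image_le[of D "f ^^ k"] by (auto simp: Fn_def)
        ultimately show ?thesis using that by (auto simp: Fn_def)
      qed
      have "rho X (qmap ((f ^^ k) ` B)) (qmap ((f ^^ k) ` C)) > \<delta>"
        using BC(5) BF unfolding q by (simp add: SFn_iter Fn_def)
      then have "dH ((f ^^ k) ` B) ((f ^^ k) ` C) > \<delta>"
        using rho_le[OF img[OF BF(1)] img[OF BF(2)]] by linarith
      then show "\<exists>x\<in>U i. \<exists>y\<in>U i. dH ((Fn_map f ^^ k) x) ((Fn_map f ^^ k) y) > \<delta>"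
        using BC by (auto simp: Fn_iter)
    qed
  qed
qed

theorem theorem3:
  fixes X :: "'a::metric_space set" and f :: "'a \<Rightarrow> 'a" and n :: nat
  assumes "continuum X" and "n \<ge> 2"
    and "continuous_on X f" and "f ` X \<subseteq> X"
  shows "(multi_sensitive X dist f \<longleftrightarrow> multi_sensitive (Fn n X) dH (Fn_map f))
       \<and> (multi_sensitive (SFn n X) (rho X) (SFn_map f) \<longrightarrow> multi_sensitive (Fn n X) dH (Fn_map f))"
proof -
  have n1: "n \<ge> 1" using assms(2) by simp
  have conn: "connected X" using assms(1) by (simp add: continuum_def)
  show ?thesis
    using ms_X_imp_Fn[OF _ n1] ms_Fn_imp_X[OF _ n1] ms_SFn_imp_Fn[OF _ assms(2) conn assms(4)] by blast
qed

end
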